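(* For every $i\in\{0,\ldots,k-n\}$, the interior of $C_i$ in $\mathcal{F}_{n+1,2d}$ is $$\mathrm{int}(C_i)=\{f\in\mathcal{F}_{n+1,2d} : \exists A\in\mathcal{G}^{-1}(f)\text{ such that } q_A(z)>0\text{ for all }[z]\in V_i(\mathbb{R})\}.$$
   Context: Let $n,d\geq 1$ be integers. $\mathcal{F}_{n+1,l}$ denotes the real vector space of real forms of degree $l$ in $X=(X_0,\ldots,X_n)$, with its Euclidean topology. Let $k:=\binom{n+d}{n}-1$. Order $I_{n+1,d}:=\{\alpha\in\mathbb{N}_0^{n+1}: |\alpha|=d\}$ lexicographically in decreasing order as $\alpha_0,\ldots,\alpha_k$ (so $\alpha_0=(d,0,\ldots,0)$, $\alpha_k=(0,\ldots,0,d)$), and set $m_j(X):=X^{\alpha_j}$. For $A\in\mathrm{Sym}_{k+1}(\mathbb{R})$ let $q_A(Z):=ZAZ^t$, $Z=(Z_0,\ldots,Z_k)$, and let $\mathcal{G}:\mathrm{Sym}_{k+1}(\mathbb{R})\to\mathcal{F}_{n+1,2d}$, $\mathcal{G}(A):=q_A(m_0(X),\ldots,m_k(X))$. For $i\in\{0,\ldots,k-n\}$ let $H_i:=\{[z]\in\mathbb{P}^k(\mathbb{C}) : \exists x\in\mathbb{C}^{n+1},\ (z_0,\ldots,z_{n+i})=(m_0(x),\ldots,m_{n+i}(x))\}$, $V_i$ its Zariski closure in $\mathbb{P}^k$, $V_i(\mathbb{R})$ its real points, and $C_i:=\{f\in\mathcal{F}_{n+1,2d} : \exists A\in\mathcal{G}^{-1}(f),\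 q_A(z)\geq 0\ \forall [z]\in V_i(\mathbb{R})\}$. (For a quadratic form the conditions $q_A(z)\geq 0$, $q_A(z)>0$ do not depend on the chosen representative $z$ of $[z]$.) *)

theory Defs
  imports "HOL-Analysis.Analysis" "HOL-Library.List_Lexorder"
begin

definition expvecs :: "nat \<Rightarrow> nat \<Rightarrow> nat list set" where
  "expvecs n d = {\<alpha>. length \<alpha> = Suc n \<and> sum_list \<alpha> = d}"

definition kdim :: "nat \<Rightarrow> nat \<Rightarrow> nat" where
  "kdim n d = ((n + d) choose n) - 1"

definition alpha :: "nat \<Rightarrow> nat \<Rightarrow> nat \<Rightarrow> nat list" where
  "alpha n d j = rev (sorted_list_of_set (expvecs n d)) ! j"

definition mono :: "nat \<Rightarrow> nat \<Rightarrow> nat \<Rightarrow> (nat \<Rightarrow> complex) \<Rightarrow> complex" where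
  "mono n d j x = (\<Prod>l\<le>n. x l ^ (alpha n d j ! l))"

(* F_{n+1,l}: real forms of degree l in X_0..X_n, represented by their coefficient
   functions (exponent vector \<mapsto> coefficient), supported on expvecs n l.
   The (product) topology on nat list \<Rightarrow> real induces the Euclidean topology on it. *)
definition forms :: "nat \<Rightarrow> nat \<Rightarrow> (nat list \<Rightarrow> real) set" where
  "forms n l = {f. \<forall>\<beta>. f \<beta> \<noteq> 0 \<longrightarrow> \<beta> \<in> expvecs n l}"

definition sym_mats :: "nat \<Rightarrow> (nat \<Rightarrow> nat \<Rightarrow> real) set" where
  "sym_mats k = {A. (\<forall>i j. A i j = A j i) \<and> (\<forall>i j. A i j \<noteq> 0 \<longrightarrow> i \<le> k \<and> j \<le> k)}"

definition qform :: "nat \<Rightarrow> (nat \<Rightarrow> nat \<Rightarrow> real) \<Rightarrow> (nat \<Rightarrow> real) \<Rightarrow> real" where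
  "qform k A z = (\<Sum>i\<le>k. \<Sum>j\<le>k. z i * A i j * z j)"

(* G(A) = q_A(m_0(X),...,m_k(X)), given by its coefficients:
   the coefficient of X^\<beta> is the sum of A i j over X^(alpha_i) X^(alpha_j) = X^\<beta> *)
definition Gmap :: "nat \<Rightarrow> nat \<Rightarrow> (nat \<Rightarrow> nat \<Rightarrow> real) \<Rightarrow> (nat list \<Rightarrow> real)" where
  "Gmap n d A = (\<lambda>\<beta>. \<Sum>i\<le>kdim n d. \<Sum>j\<le>kdim n d.
      if map2 (+) (alpha n d i) (alpha n d j) = \<beta> then A i j else 0)"

(* Points of P^k(C), represented by nonzero representatives z in C^(k+1)
   (coordinates z 0..z k, z j = 0 for j > k) *)
definition pts :: "nat \<Rightarrow> (nat \<Rightarrow> complex) set" where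
  "pts k = {z. (\<exists>j\<le>k. z j \<noteq> 0) \<and> (\<forall>j>k. z j = 0)}"

definition hom_poly :: "nat \<Rightarrow> nat \<Rightarrow> (nat list \<Rightarrow> complex) \<Rightarrow> bool" where
  "hom_poly k e p \<longleftrightarrow> (\<forall>\<beta>. p \<beta> \<noteq> 0 \<longrightarrow> \<beta> \<in> expvecs k e)"

definition heval :: "nat \<Rightarrow> nat \<Rightarrow> (nat list \<Rightarrow> complex) \<Rightarrow> (nat \<Rightarrow> complex) \<Rightarrow> complex" where
  "heval k e p z = (\<Sum>\<beta>\<in>expvecs k e. p \<beta> * (\<Prod>l\<le>k. z l ^ (\<beta> ! l)))"

definition zariski_closure :: "nat \<Rightarrow> (nat \<Rightarrow> complex) set \<Rightarrow> (nat \<Rightarrow> complex) set" where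
  "zariski_closure k S = {z \<in> pts k. \<forall>e p. hom_poly k e p \<and> (\<forall>w\<in>S. heval k e p w = 0)
       \<longrightarrow> heval k e p z = 0}"

definition Hset :: "nat \<Rightarrow> nat \<Rightarrow> nat \<Rightarrow> (nat \<Rightarrow> complex) set" where
  "Hset n d i = {z \<in> pts (kdim n d). \<exists>x. \<forall>j\<le>n+i. z j = mono n d j x}"

definition Vset :: "nat \<Rightarrow> nat \<Rightarrow> nat \<Rightarrow> (nat \<Rightarrow> complex) set" where
  "Vset n d i = zariski_closure (kdim n d) (Hset n d i)"

definition VRset :: "nat \<Rightarrow> nat \<Rightarrow> nat \<Rightarrow> (nat \<Rightarrow> real) set" where
  "VRset n d i = {y. (\<lambda>j. complex_of_real (y j)) \<in> Vset n d i}"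

definition Cset :: "nat \<Rightarrow> nat \<Rightarrow> nat \<Rightarrow> (nat list \<Rightarrow> real) set" where
  "Cset n d i = {f \<in> forms n (2*d). \<exists>A \<in> sym_mats (kdim n d). Gmap n d A = f \<and>
      (\<forall>y\<in>VRset n d i. qform (kdim n d) A y \<ge> 0)}"

end

theory Submission imports Defs begin

lemma card_expvecs: "card (expvecs n d) = Suc (kdim n d)"
proof -
  have "card (expvecs n d) = (d + Suc n - 1) choose d"
    unfolding expvecs_def using card_length_sum_list[of "Suc n" d] by simp
  also have "\<dots> = (n + d) choose n"
    using binomial_symmetric[of n "n+d"] by (simp add: add.commute)
  finally show ?thesis unfolding kdim_def
    by (metis Suc_diff_1 bot_nat_0.not_eq_extremum zero_less_binomial_iff le_add1)
qed

lemma finite_expvecs: "finite (expvecs n d)"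
  using card_expvecs[of n d] card.infinite by fastforce

lemma alpha_in: "j \<le> kdim n d \<Longrightarrow> alpha n d j \<in> expvecs n d"
  unfolding alpha_def
  by (metis card_expvecs finite_expvecs length_rev length_sorted_list_of_set less_Suc_eq_le
      nth_mem set_rev set_sorted_list_of_set)

lemma alpha_surj: "a \<in> expvecs n d \<Longrightarrow> \<exists>j\<le>kdim n d. alpha n d j = a"
proof -
  assume a: "a \<in> expvecs n d"
  let ?L = "rev (sorted_list_of_set (expvecs n d))"
  have "a \<in> set ?L" using a finite_expvecs by simp
  then obtain j where "j < length ?L" "?L ! j = a" by (metis in_set_conv_nth)
  then show ?thesis unfolding alpha_def using card_expvecs[of n d] finite_expvecs
    by (metis length_rev length_sorted_list_of_set less_Suc_eq_le)
qed

lemma split_list: "(a::nat) \<le> sum_list b \<Longrightarrow> \<exists>c. length c = length b \<and> sum_list c = a \<and> list_all2 (\<le>) c b"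
proof (induction b arbitrary: a)
  case Nil then show ?case by simp
next
  case (Cons x b)
  obtain c where c: "length c = length b" "sum_list c = a - min a x" "list_all2 (\<le>) c b"
  proof -
    have "a - min a x \<le> sum_list b" using Cons.prems by simp
    then show ?thesis using Cons.IH that by blast
  qed
  show ?case using c Cons.prems by (intro exI[of _ "min a x # c"]) auto
qed

lemma le_sum: "list_all2 (\<le>) c (b::nat list) \<Longrightarrow> sum_list c \<le> sum_list b"
  by (induction c b rule: list_all2_induct) auto

lemma split_sum: "list_all2 (\<le>) c (b::nat list) \<Longrightarrow> map2 (+) c (map2 (-) b c) = b \<and> sum_list (map2 (-) b c) = sum_list b - sum_list c \<and> length (map2 (-) b c) = length b"
proof (induction c b rule: list_all2_induct)
  case Nil then show ?case by simp
next
  case (Cons x xs y ys)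
  then show ?case using le_sum[OF Cons(2)] by (auto simp: list_all2_lengthD)
qed


lemma sum_map2: "length a = length b \<Longrightarrow> sum_list (map2 (+) a b) = sum_list a + sum_list (b::nat list)"
  by (induction a b rule: list_induct2) auto

lemma map2_comm: "map2 (+) a b = map2 (+) b (a::nat list)"
proof (induction a arbitrary: b)
  case Nil show ?case by simp
next
  case (Cons x xs) then show ?case by (cases b) auto
qed

lemma s_in: "i \<le> kdim n d \<Longrightarrow> j \<le> kdim n d \<Longrightarrow> map2 (+) (alpha n d i) (alpha n d j) \<in> expvecs n (2*d)"
  using alpha_in[of i n d] alpha_in[of j n d] by (auto simp: expvecs_def sum_map2)

lemma s_surj:
  assumes "\<beta> \<in> expvecs n (2*d)"
  shows "\<exists>i j. i \<le> kdim n d \<and> j \<le> kdim n d \<and> map2 (+) (alpha n d i) (alpha n d j) = \<beta>"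
proof -
  have b: "length \<beta> = Suc n" "sum_list \<beta> = 2*d" using assms by (auto simp: expvecs_def)
  obtain c where c: "length c = length \<beta>" "sum_list c = d" "list_all2 (\<le>) c \<beta>"
  proof -
    have "d \<le> sum_list \<beta>" using b by simp
    from split_list[OF this] obtain c0 where "length c0 = length \<beta> \<and> sum_list c0 = d \<and> list_all2 (\<le>) c0 \<beta>" by blast
    then show ?thesis by (intro that[of c0]) simp_all
  qed
  let ?c' = "map2 (-) \<beta> c"
  have c': "map2 (+) c ?c' = \<beta>" "sum_list ?c' = d" "length ?c' = Suc n"
  proof -
    note sp = split_sum[OF c(3)]
    show "map2 (+) c ?c' = \<beta>" using sp by blast
    show "sum_list ?c' = d" using sp b(2) c(2) by linarith
    show "length ?c' = Suc n" using sp b(1) by linarith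
  qed
  have c1: "c \<in> expvecs n d" using c b by (simp add: expvecs_def)
  have c2: "?c' \<in> expvecs n d" using c' by (simp add: expvecs_def)
  obtain i where i: "i \<le> kdim n d" "alpha n d i = c" using alpha_surj[OF c1] by auto
  obtain j where j: "j \<le> kdim n d" "alpha n d j = ?c'" using alpha_surj[OF c2] by auto
  show ?thesis using c'(1) i j by (intro exI[of _ i] exI[of _ j]) simp
qed

lemma Gmap_forms: "Gmap n d A \<in> forms n (2*d)"
  unfolding forms_def Gmap_def mem_Collect_eq
proof (intro allI impI)
  fix \<beta> assume "(\<Sum>i\<le>kdim n d. \<Sum>j\<le>kdim n d. if map2 (+) (alpha n d i) (alpha n d j) = \<beta> then A i j else 0) \<noteq> 0"
  then obtain i where i: "i \<le> kdim n d" "(\<Sum>j\<le>kdim n d. if map2 (+) (alpha n d i) (alpha n d j) = \<beta> then A i j else 0) \<noteq> 0"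
    by (rule sum.not_neutral_contains_not_neutral) simp
  from i(2) obtain j where j: "j \<le> kdim n d" "(if map2 (+) (alpha n d i) (alpha n d j) = \<beta> then A i j else 0) \<noteq> 0"
    by (rule sum.not_neutral_contains_not_neutral) simp
  from j show "\<beta> \<in> expvecs n (2*d)" using s_in[OF i(1) j(1)] by (auto split: if_splits)
qed

lemma if_add0: "(if P then (a::real)+b else 0) = (if P then a else 0) + (if P then b else 0)" by simp
lemma if_mult0: "(if P then (c::real)*b else 0) = c * (if P then b else 0)" by simp

lemma Gmap_add: "Gmap n d (\<lambda>i j. A i j + B i j) = (\<lambda>\<beta>. Gmap n d A \<beta> + Gmap n d B \<beta>)"
  unfolding Gmap_def if_add0 sum.distrib ..

lemma Gmap_smult: "Gmap n d (\<lambda>i j. c * A i j) = (\<lambda>\<beta>. c * Gmap n d A \<beta>)"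
  unfolding Gmap_def if_mult0 sum_distrib_left ..

definition Nc :: "nat \<Rightarrow> nat \<Rightarrow> nat list \<Rightarrow> nat" where
  "Nc n d \<beta> = card {p \<in> {..kdim n d} \<times> {..kdim n d}. map2 (+) (alpha n d (fst p)) (alpha n d (snd p)) = \<beta>}"

definition Rinv :: "nat \<Rightarrow> nat \<Rightarrow> (nat list \<Rightarrow> real) \<Rightarrow> nat \<Rightarrow> nat \<Rightarrow> real" where
  "Rinv n d h = (\<lambda>i j. if i \<le> kdim n d \<and> j \<le> kdim n d then
      h (map2 (+) (alpha n d i) (alpha n d j)) / real (Nc n d (map2 (+) (alpha n d i) (alpha n d j))) else 0)"

lemma indic_sum: "(\<Sum>i\<le>(K::nat). \<Sum>j\<le>K. if P i j then c else 0) = (c::real) * card {p \<in> {..K} \<times> {..K}. P (fst p) (snd p)}"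
proof -
  have "(\<Sum>i\<le>K. \<Sum>j\<le>K. if P i j then c else 0) = (\<Sum>p\<in>{..K} \<times> {..K}. if P (fst p) (snd p) then c else 0)"
    by (simp add: sum.cartesian_product split_beta)
  also have "\<dots> = (\<Sum>p\<in>{p \<in> {..K} \<times> {..K}. P (fst p) (snd p)}. c)"
    by (subst sum.inter_filter) (auto intro: finite_cartesian_product)
  finally show ?thesis by simp
qed

lemma Gmap_Rinv: assumes "h \<in> forms n (2*d)" shows "Gmap n d (Rinv n d h) = h"
proof
  fix \<beta>
  have "Gmap n d (Rinv n d h) \<beta> = (\<Sum>i\<le>kdim n d. \<Sum>j\<le>kdim n d.
      if map2 (+) (alpha n d i) (alpha n d j) = \<beta> then h \<beta> / real (Nc n d \<beta>) else 0)"
    unfolding Gmap_def Rinv_def by (auto intro!: sum.cong)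
  also have "\<dots> = h \<beta> / real (Nc n d \<beta>) * real (Nc n d \<beta>)"
    unfolding indic_sum Nc_def by simp
  also have "\<dots> = h \<beta>"
  proof (cases "h \<beta> = 0")
    case False
    then have "\<beta> \<in> expvecs n (2*d)" using assms by (auto simp: forms_def)
    then obtain i j where ij: "i \<le> kdim n d" "j \<le> kdim n d" "map2 (+) (alpha n d i) (alpha n d j) = \<beta>"
      using s_surj by blast
    have "Nc n d \<beta> \<noteq> 0" unfolding Nc_def
      by (subst card_0_eq) (use ij in auto)
    then show ?thesis by simp
  qed simp
  finally show "Gmap n d (Rinv n d h) \<beta> = h \<beta>" .
qed

lemma Rinv_sym: "Rinv n d h \<in> sym_mats (kdim n d)"
  unfolding sym_mats_def Rinv_def by (auto simp: map2_comm)

lemma Rinv_bound: assumes "\<And>\<beta>. \<bar>h \<beta>\<bar> \<le> e" shows "\<bar>Rinv n d h i j\<bar> \<le> e"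
proof -
  have "\<bar>x / real N\<bar> \<le> \<bar>x\<bar>" for x N
  proof (cases "N = 0")
    case False
    then have "\<bar>x\<bar> \<le> \<bar>x\<bar> * real N" using mult_left_mono[of 1 "real N" "\<bar>x\<bar>"] by simp
    then show ?thesis using False by (simp add: divide_le_eq abs_divide)
  qed simp
  moreover have "0 \<le> e" using assms[of "[]"] by simp
  ultimately show ?thesis unfolding Rinv_def using assms by (auto intro: order_trans)
qed

lemma qform_add: "qform K (\<lambda>i j. A i j + B i j) y = qform K A y + qform K B y"
  unfolding qform_def by (simp add: algebra_simps sum.distrib)

lemma qform_id: "qform K (\<lambda>i j. if i \<le> K \<and> j \<le> K \<and> i = j then c else 0) y = c * (\<Sum>j\<le>K. (y j)^2)"
proof -
  have *: "(\<Sum>j\<le>K. y i * (if i \<le> K \<and> j \<le> K \<and> i = j then c else 0) * y j) = c * (y i)^2"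
    if i: "i \<le> K" for i
  proof -
    have "(\<Sum>j\<le>K. y i * (if i \<le> K \<and> j \<le> K \<and> i = j then c else 0) * y j)
        = (\<Sum>j\<le>K. if j = i then c * (y i)^2 else 0)"
      by (rule sum.cong) (auto simp: power2_eq_square i)
    also have "\<dots> = c * (y i)^2" using i by simp
    finally show ?thesis .
  qed
  have "qform K (\<lambda>i j. if i \<le> K \<and> j \<le> K \<and> i = j then c else 0) y = (\<Sum>i\<le>K. c * (y i)^2)"
    unfolding qform_def by (rule sum.cong[OF refl], rule *, simp)
  then show ?thesis by (simp add: sum_distrib_left)
qed

lemma qform_scale: "qform K A (\<lambda>j. c * y j) = c^2 * qform K A y"
  unfolding qform_def by (simp add: sum_distrib_left power2_eq_square algebra_simps)

lemma qform_bound: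
  assumes "\<And>i j. \<bar>E i j\<bar> \<le> e"
  shows "\<bar>qform K E y\<bar> \<le> e * real (Suc K) * (\<Sum>j\<le>K. (y j)^2)"
proof -
  have e: "0 \<le> e" using assms[of 0 0] by simp
  have "\<bar>qform K E y\<bar> \<le> (\<Sum>i\<le>K. \<Sum>j\<le>K. \<bar>y i * E i j * y j\<bar>)"
    unfolding qform_def by (rule order_trans[OF sum_abs], rule sum_mono, rule sum_abs)
  also have "\<dots> \<le> (\<Sum>i\<le>K. \<Sum>j\<le>K. e * (((y i)^2 + (y j)^2)/2))"
  proof (intro sum_mono)
    fix i j
    have "\<bar>y i\<bar> * \<bar>y j\<bar> \<le> ((y i)^2 + (y j)^2)/2"
      using sum_squares_bound[of "\<bar>y i\<bar>" "\<bar>y j\<bar>"] by (simp add: power2_eq_square algebra_simps)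
    then show "\<bar>y i * E i j * y j\<bar> \<le> e * (((y i)^2 + (y j)^2)/2)"
      using mult_mono[OF assms[of i j] \<open>\<bar>y i\<bar> * \<bar>y j\<bar> \<le> _\<close>] e
      by (simp add: abs_mult algebra_simps)
  qed
  also have "\<dots> = e * real (Suc K) * (\<Sum>j\<le>K. (y j)^2)"
  proof -
    have "(\<Sum>j\<le>K. e * (((y i)^2 + (y j)^2)/2)) = real (Suc K) * (e/2) * (y i)^2 + (e/2) * (\<Sum>j\<le>K. (y j)^2)" for i
      by (simp add: sum.distrib sum_distrib_left algebra_simps add_divide_distrib)
    then have "(\<Sum>i\<le>K. \<Sum>j\<le>K. e * (((y i)^2 + (y j)^2)/2))
       = (\<Sum>i\<le>K. real (Suc K) * (e/2) * (y i)^2 + (e/2) * (\<Sum>j\<le>K. (y j)^2))" by simp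
    also have "\<dots> = real (Suc K) * (e/2) * (\<Sum>j\<le>K. (y j)^2) + real (Suc K) * ((e/2) * (\<Sum>j\<le>K. (y j)^2))"
      by (simp only: sum.distrib sum_distrib_left[symmetric] sum_constant card_atMost) (simp add: field_simps)
    also have "\<dots> = e * real (Suc K) * (\<Sum>j\<le>K. (y j)^2)"
      by (simp add: algebra_simps)
    finally show ?thesis .
  qed
  finally show ?thesis .
qed


lemma heval_scale: "heval k e p (\<lambda>j. a * z j) = a^e * heval k e p z"
  unfolding heval_def sum_distrib_left
proof (rule sum.cong[OF refl])
  fix \<beta> assume b: "\<beta> \<in> expvecs k e"
  have s: "(\<Sum>l\<le>k. \<beta> ! l) = e"
  proof -
    have "sum_list \<beta> = (\<Sum>l = 0..<length \<beta>. \<beta> ! l)" by (rule sum_list_sum_nth)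
    also have "{0..<length \<beta>} = {..k}" using b by (auto simp: expvecs_def)
    finally show ?thesis using b by (simp add: expvecs_def)
  qed
  have "(\<Prod>l\<le>k. (a * z l) ^ (\<beta> ! l)) = (\<Prod>l\<le>k. a ^ (\<beta> ! l)) * (\<Prod>l\<le>k. z l ^ (\<beta> ! l))"
    by (simp add: power_mult_distrib prod.distrib)
  also have "(\<Prod>l\<le>k. a ^ (\<beta> ! l)) = a ^ e" by (simp add: power_sum[symmetric] s)
  finally show "p \<beta> * (\<Prod>l\<le>k. (a * z l) ^ (\<beta> ! l)) = a ^ e * (p \<beta> * (\<Prod>l\<le>k. z l ^ (\<beta> ! l)))"
    by simp
qed

lemma VR_scale:
  assumes y: "y \<in> VRset n d i" and c: "c \<noteq> 0"
  shows "(\<lambda>j. c * y j) \<in> VRset n d i"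
proof -
  let ?K = "kdim n d"
  have h: "(\<lambda>j. complex_of_real (c * y j)) = (\<lambda>j. complex_of_real c * complex_of_real (y j))" by simp
  show ?thesis using y c unfolding VRset_def Vset_def zariski_closure_def pts_def mem_Collect_eq h heval_scale
    by auto
qed

lemma VR_props:
  assumes "y \<in> VRset n d i"
  shows "(\<forall>j>kdim n d. y j = 0) \<and> (\<exists>j\<le>kdim n d. y j \<noteq> 0)"
  using assms unfolding VRset_def Vset_def zariski_closure_def pts_def by auto

lemma VR_pos: "y \<in> VRset n d i \<Longrightarrow> 0 < (\<Sum>j\<le>kdim n d. (y j)^2)"
proof -
  assume "y \<in> VRset n d i"
  then obtain j where j: "j \<le> kdim n d" "y j \<noteq> 0" using VR_props by blast
  have "0 < (y j)^2" using j by simp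
  also have "\<dots> \<le> (\<Sum>j\<le>kdim n d. (y j)^2)" by (rule member_le_sum) (use j in auto)
  finally show ?thesis .
qed

lemma coord_cont [continuous_intros]: "continuous_on S (\<lambda>y::nat\<Rightarrow>real. y l)"
  by (rule continuous_on_subset[OF continuous_on_product_coordinates]) simp

lemma heval_cont: "continuous_on UNIV (\<lambda>y::nat\<Rightarrow>real. heval k e p (\<lambda>j. complex_of_real (y j)))"
  unfolding heval_def by (intro continuous_intros)

lemma qform_cont: "continuous_on S (\<lambda>y. qform K A y)"
  unfolding qform_def by (intro continuous_intros)

definition Zset :: "nat \<Rightarrow> nat \<Rightarrow> nat \<Rightarrow> (nat \<Rightarrow> real) set" where
  "Zset n d i = {y. \<forall>e p. hom_poly (kdim n d) e p \<and> (\<forall>w\<in>Hset n d i. heval (kdim n d) e p w = 0)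
       \<longrightarrow> heval (kdim n d) e p (\<lambda>j. complex_of_real (y j)) = 0}"

lemma closed_Z: "closed (Zset n d i)"
proof -
  have "Zset n d i = (\<Inter>q\<in>{(e,p). hom_poly (kdim n d) e p \<and> (\<forall>w\<in>Hset n d i. heval (kdim n d) e p w = 0)}.
          {y. heval (kdim n d) (fst q) (snd q) (\<lambda>j. complex_of_real (y j)) = 0})"
    unfolding Zset_def by auto
  also have "closed \<dots>"
    by (intro closed_INT ballI closed_Collect_eq heval_cont continuous_on_const)
  finally show ?thesis .
qed

lemma compact_box: "compact (PiE UNIV (\<lambda>j::nat. if j \<le> K then {-1..1::real} else {0}))"
proof -
  have "compactin (product_topology (\<lambda>_. euclidean) UNIV) (PiE UNIV (\<lambda>j::nat. if j \<le> K then {-1..1::real} else {0}))"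
    unfolding compactin_PiE by auto
  then show ?thesis unfolding euclidean_product_topology by simp
qed

lemma uniform_pos:
  assumes pos: "\<forall>y\<in>VRset n d i. qform (kdim n d) A y > 0"
  shows "\<exists>m>0. \<forall>y\<in>VRset n d i. m * (\<Sum>j\<le>kdim n d. (y j)^2) \<le> qform (kdim n d) A y"
proof -
  let ?K = "kdim n d"
  define S where "S = VRset n d i \<inter> {y. (\<Sum>j\<le>?K. (y j)^2) = 1}"
  define B where "B = PiE UNIV (\<lambda>j::nat. if j \<le> ?K then {-1..1::real} else {0})"
  have SB: "S = B \<inter> (Zset n d i \<inter> {y. (\<Sum>j\<le>?K. (y j)^2) = 1})"
  proof (intro equalityI subsetI)
    fix y assume y: "y \<in> S"
    then have yv: "y \<in> VRset n d i" and s1: "(\<Sum>j\<le>?K. (y j)^2) = 1" by (auto simp: S_def)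
    have "y \<in> B"
    proof -
      have "\<bar>y j\<bar> \<le> 1" if "j \<le> ?K" for j
      proof -
        have "(y j)^2 \<le> (\<Sum>j\<le>?K. (y j)^2)" by (rule member_le_sum) (use that in auto)
        then show ?thesis using s1 by (simp add: abs_square_le_1)
      qed
      then show ?thesis using VR_props[OF yv] unfolding B_def by (auto simp: PiE_iff abs_le_iff)
    qed
    moreover have "y \<in> Zset n d i" using yv unfolding VRset_def Vset_def zariski_closure_def Zset_def by auto
    ultimately show "y \<in> B \<inter> (Zset n d i \<inter> {y. (\<Sum>j\<le>?K. (y j)^2) = 1})" using s1 by auto
  next
    fix y assume y: "y \<in> B \<inter> (Zset n d i \<inter> {y. (\<Sum>j\<le>?K. (y j)^2) = 1})"
    then have bx: "\<forall>j. y j \<in> (if j \<le> ?K then {-1..1} else {0})" unfolding B_def by (simp add: PiE_iff)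
    have z: "\<forall>j>?K. y j = 0"
    proof (intro allI impI)
      fix j assume "?K < j"
      with bx[rule_format, of j] show "y j = 0" by simp
    qed
    have s1: "(\<Sum>j\<le>?K. (y j)^2) = 1" using y by auto
    have nz: "\<exists>j\<le>?K. y j \<noteq> 0"
    proof (rule ccontr)
      assume "\<not> ?thesis"
      then have "(\<Sum>j\<le>?K. (y j)^2) = 0" by simp
      then show False using s1 by simp
    qed
    have "(\<lambda>j. complex_of_real (y j)) \<in> pts ?K" using z nz unfolding pts_def by auto
    then show "y \<in> S" using y s1 unfolding S_def VRset_def Vset_def zariski_closure_def Zset_def by auto
  qed
  have cS: "compact S" unfolding SB B_def
    by (intro compact_Int_closed compact_box closed_Int closed_Z closed_Collect_eq continuous_intros)
  show ?thesis
  proof (cases "S = {}")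
    case True
    have "VRset n d i = {}"
    proof (rule ccontr)
      assume "VRset n d i \<noteq> {}"
      then obtain y where y: "y \<in> VRset n d i" by blast
      define r where "r = sqrt (\<Sum>j\<le>?K. (y j)^2)"
      have r: "r > 0" unfolding r_def using VR_pos[OF y] by simp
      have "(\<lambda>j. (1/r) * y j) \<in> VRset n d i" using VR_scale[OF y, of "1/r"] r by simp
      moreover have "(\<Sum>j\<le>?K. ((1/r) * y j)^2) = 1"
        using r VR_pos[OF y] by (simp add: power_mult_distrib sum_distrib_left[symmetric] r_def power_divide sum_divide_distrib[symmetric])
      ultimately have "(\<lambda>j. (1/r) * y j) \<in> S" unfolding S_def by simp
      then show False using True by simp
    qed
    then show ?thesis by (intro exI[of _ 1]) simp
  next
    case False
    obtain x where x: "x \<in> S" "\<forall>y\<in>S. qform ?K A x \<le> qform ?K A y"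
      using continuous_attains_inf[OF cS False qform_cont] by blast
    define m where "m = qform ?K A x"
    have m: "m > 0" using x pos unfolding m_def S_def by auto
    have "m * (\<Sum>j\<le>?K. (y j)^2) \<le> qform ?K A y" if y: "y \<in> VRset n d i" for y
    proof -
      define r where "r = sqrt (\<Sum>j\<le>?K. (y j)^2)"
      have r: "r > 0" unfolding r_def using VR_pos[OF y] by simp
      have r2: "r^2 = (\<Sum>j\<le>?K. (y j)^2)" unfolding r_def using VR_pos[OF y] by simp
      have "(\<lambda>j. (1/r) * y j) \<in> VRset n d i" using VR_scale[OF y, of "1/r"] r by simp
      moreover have "(\<Sum>j\<le>?K. ((1/r) * y j)^2) = 1"
        using r r2 VR_pos[OF y] by (simp add: power_mult_distrib sum_distrib_left[symmetric] power_divide sum_divide_distrib[symmetric])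
      ultimately have "(\<lambda>j. (1/r) * y j) \<in> S" unfolding S_def by simp
      then have "m \<le> qform ?K A (\<lambda>j. (1/r) * y j)" using x unfolding m_def by blast
      also have "\<dots> = qform ?K A y / r^2" using qform_scale[of ?K A "1/r" y] by (simp add: power_divide)
      finally have "m * r^2 \<le> qform ?K A y" using r by (simp add: le_divide_eq)
      then show ?thesis using r2 by simp
    qed
    then show ?thesis using m by blast
  qed
qed


theorem theorem2p3:
  fixes n d i :: nat
  assumes "1 \<le> n" and "1 \<le> d" and "i \<le> kdim n d - n"
  shows "(subtopology euclidean (forms n (2*d))) interior_of (Cset n d i) =
    {f \<in> forms n (2*d). \<exists>A \<in> sym_mats (kdim n d). Gmap n d A = f \<and>
      (\<forall>y\<in>VRset n d i. qform (kdim n d) A y > 0)}"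
proof -
  let ?K = "kdim n d" and ?F = "forms n (2*d)"
  let ?R = "{f \<in> ?F. \<exists>A \<in> sym_mats ?K. Gmap n d A = f \<and> (\<forall>y\<in>VRset n d i. qform ?K A y > 0)}"
  show ?thesis
  proof (intro equalityI subsetI)
    fix f assume "f \<in> subtopology euclidean ?F interior_of Cset n d i"
    then have "\<exists>T. openin (top_of_set ?F) T \<and> f \<in> T \<and> T \<subseteq> Cset n d i"
      by (simp add: interior_of_def)
    then obtain T where T: "openin (top_of_set ?F) T" "f \<in> T" "T \<subseteq> Cset n d i"
      by (elim exE conjE)
    have "\<exists>W. open W \<and> T = ?F \<inter> W" using T(1) by (simp only: openin_open)
    then obtain W where W: "open W" "T = ?F \<inter> W" by (elim exE conjE)
    have fF: "f \<in> ?F" "f \<in> W" using T W by auto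
    define Id where "Id = (\<lambda>i j. if i \<le> ?K \<and> j \<le> ?K \<and> i = j then (1::real) else 0)"
    define g where "g = Gmap n d Id"
    have gF: "g \<in> ?F" unfolding g_def by (rule Gmap_forms)
    define p where "p = (\<lambda>t::real. (\<lambda>\<beta>. f \<beta> - t * g \<beta>))"
    have pc: "continuous_on UNIV p" unfolding p_def by (intro continuous_intros)
    have o: "open (p -` W)" using continuous_on_open_vimage[of UNIV p] pc W(1) by simp
    have z: "0 \<in> p -` W" using fF unfolding p_def by simp
    have "\<exists>e>0. ball 0 e \<subseteq> p -` W" by (rule iffD1[OF open_contains_ball_eq[OF o] z])
    then obtain e where e: "e > 0" "ball 0 e \<subseteq> p -` W" by (elim exE conjE)
    define \<delta> where "\<delta> = e/2"
    have db: "\<delta> \<in> ball 0 e" using e unfolding \<delta>_def by (simp add: dist_real_def)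
    have \<delta>: "\<delta> > 0" "p \<delta> \<in> W" using e(1) unfolding \<delta>_def apply simp
      using e(2) db unfolding \<delta>_def by (meson subsetD vimageE)
    have "p \<delta> \<in> ?F" unfolding forms_def mem_Collect_eq
    proof (intro allI impI)
      fix \<beta> assume "p \<delta> \<beta> \<noteq> 0"
      then have "f \<beta> \<noteq> 0 \<or> g \<beta> \<noteq> 0" unfolding p_def by auto
      then show "\<beta> \<in> expvecs n (2*d)" using fF(1) gF unfolding forms_def by auto
    qed
    then have "p \<delta> \<in> Cset n d i" using T W \<delta> by auto
    then obtain A' where A': "A' \<in> sym_mats ?K" "Gmap n d A' = p \<delta>"
        "\<forall>y\<in>VRset n d i. qform ?K A' y \<ge> 0" unfolding Cset_def by auto
    define A where "A = (\<lambda>i j. A' i j + \<delta> * Id i j)"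
    have "A \<in> sym_mats ?K" using A'(1) unfolding A_def Id_def sym_mats_def by auto
    moreover have "Gmap n d A = f" unfolding A_def Gmap_add Gmap_smult A'(2) g_def[symmetric] p_def by simp
    moreover have "\<forall>y\<in>VRset n d i. qform ?K A y > 0"
    proof
      fix y assume y: "y \<in> VRset n d i"
      have eq: "(\<lambda>i j. \<delta> * Id i j) = (\<lambda>i j. if i \<le> ?K \<and> j \<le> ?K \<and> i = j then \<delta> else 0)"
        unfolding Id_def by (simp add: fun_eq_iff)
      have "qform ?K A y = qform ?K A' y + \<delta> * (\<Sum>j\<le>?K. (y j)^2)"
        unfolding A_def qform_add eq qform_id ..
      then show "qform ?K A y > 0" using A'(3) y VR_pos[OF y] \<delta>(1)
        by (smt (verit) mult_pos_pos)
    qed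
    ultimately show "f \<in> ?R" using fF by blast
  next
    fix f assume "f \<in> ?R"
    then obtain A where fF: "f \<in> ?F" and A: "A \<in> sym_mats ?K" "Gmap n d A = f"
      "\<forall>y\<in>VRset n d i. qform ?K A y > 0" by blast
    obtain m where m: "m > 0" "\<forall>y\<in>VRset n d i. m * (\<Sum>j\<le>?K. (y j)^2) \<le> qform ?K A y"
      using uniform_pos[OF A(3)] by blast
    define \<eta> where "\<eta> = m / (2 * real (Suc ?K))"
    have \<eta>: "\<eta> > 0" using m unfolding \<eta>_def by simp
    have \<eta>2: "\<eta> * real (Suc ?K) = m / 2" unfolding \<eta>_def
    proof -
      have "real (Suc ?K) > 0" by simp
      then show "m / (2 * real (Suc ?K)) * real (Suc ?K) = m / 2" by (simp add: field_simps)
    qed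
    define W where "W = {h. \<forall>\<beta>\<in>expvecs n (2*d). h (id \<beta>) \<in> ball (f \<beta>) \<eta>}"
    have oW: "open W" unfolding W_def
      by (rule product_topology_basis') (simp_all add: finite_expvecs)
    have "openin (top_of_set ?F) (?F \<inter> W)" using oW openin_open by blast
    moreover have "f \<in> ?F \<inter> W" using fF \<eta> by (simp add: W_def)
    moreover have "?F \<inter> W \<subseteq> Cset n d i"
    proof
      fix h assume h: "h \<in> ?F \<inter> W"
      define D where "D = (\<lambda>\<beta>. h \<beta> - f \<beta>)"
      have DF: "D \<in> ?F" unfolding forms_def mem_Collect_eq
      proof (intro allI impI)
        fix \<beta> assume "D \<beta> \<noteq> 0"
        then have "f \<beta> \<noteq> 0 \<or> h \<beta> \<noteq> 0" unfolding D_def by auto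
        then show "\<beta> \<in> expvecs n (2*d)" using fF h unfolding forms_def by auto
      qed
      have Db: "\<bar>D \<beta>\<bar> \<le> \<eta>" for \<beta>
      proof (cases "\<beta> \<in> expvecs n (2*d)")
        case True
        then have "dist (f \<beta>) (h \<beta>) < \<eta>" using h unfolding W_def by auto
        then show ?thesis unfolding D_def dist_real_def by simp
      next
        case False
        then have "D \<beta> = 0" using DF unfolding forms_def by auto
        then show ?thesis using \<eta> by simp
      qed
      define E where "E = Rinv n d D"
      have Eb: "\<bar>E i j\<bar> \<le> \<eta>" for i j unfolding E_def by (rule Rinv_bound[OF Db])
      define A' where "A' = (\<lambda>i j. A i j + E i j)"
      have symA': "A' \<in> sym_mats ?K" using A(1) Rinv_sym[of n d D] unfolding A'_def E_def sym_mats_def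
        by (auto, (metis add.left_neutral add.right_neutral)+)
      have GA': "Gmap n d A' = h" unfolding A'_def Gmap_add E_def Gmap_Rinv[OF DF] A(2) by (simp add: D_def)
      have "qform ?K A' y \<ge> 0" if y: "y \<in> VRset n d i" for y
      proof -
        have "\<bar>qform ?K E y\<bar> \<le> \<eta> * real (Suc ?K) * (\<Sum>j\<le>?K. (y j)^2)" by (rule qform_bound[OF Eb])
        then have "\<bar>qform ?K E y\<bar> \<le> m/2 * (\<Sum>j\<le>?K. (y j)^2)" by (simp only: \<eta>2)
        moreover have "m * (\<Sum>j\<le>?K. (y j)^2) \<le> qform ?K A y" using m y by blast
        moreover have "0 \<le> m * (\<Sum>j\<le>?K. (y j)^2)" using m VR_pos[OF y] by simp
        ultimately show ?thesis unfolding A'_def qform_add by linarith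
      qed
      then show "h \<in> Cset n d i" using h symA' GA' unfolding Cset_def by auto
    qed
    ultimately show "f \<in> subtopology euclidean ?F interior_of Cset n d i"
      unfolding interior_of_def by blast
  qed
qed

end
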